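(* Assume (A1), (A2), let $\kappa\ge\max_{|\xi|\le\beta}|f_0'(\xi)|$, and let $u_0$, $g$ be as follows: $u_0\in\mathcal X$ with $|u_0|\le\beta$ on $\widehat\Omega$, and (Case (C1)) $g\in C([0,\infty);\partial X)$ with $g(0,\cdot)=u_0$ on $\Omega_c^*$ and $|g(t,x)|\le\beta$ for all $t\ge0$, $x\in\Omega_c^*$. For a time step $\tau>0$ and $t_n=n\tau$, define the ETD1 scheme: $v^0=u_0$ and, for $n\ge0$, $v^{n+1}=w^n(\tau)$, where $w^n:[0,\tau]\to\mathcal X$ solves $$w^n_s+\kappa w^n=\mathcal Lw^n+\mathcal N[v^n],\ s\in(0,\tau],\ x\in\Omega^*;\quad w^n(s,x)=g(t_n+s,x),\ s\in[0,\tau],\ x\in\Omega_c^*;\quad w^n(0,x)=v^n(x),\ x\in\widehat\Omega,$$ with $\mathcal N[w](x)=\kappa w(x)+f_0(w(x))$. Then for every $\tau>0$, $\|v^n\|\le\beta$ for all $n\ge0$. The same holds in Case (C2) (periodic $u_0$, no boundary equation).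
   Context: Domain setting: one of (D1) $\Omega\subset\mathbb{R}^d$ is open, connected, bounded with Lipschitz boundary $\partial\Omega$; $\Omega_c\subset\mathbb{R}^d$ is a closed connected set with $\Omega_c\cap\Omega=\emptyset$ and $\partial\Omega\subset\Omega_c$; (D2) (discrete) given sets $\tilde\Omega,\tilde\Omega_c$ as in (D1) and the finite set $\Sigma$ of nodes of a mesh of $\tilde\Omega\cup\tilde\Omega_c$, put $\Omega=\tilde\Omega\cap\Sigma$, $\partial\Omega=\partial\tilde\Omega\cap\Sigma$, $\Omega_c=\tilde\Omega_c\cap\Sigma$. In both cases $\overline\Omega=\Omega\cup\partial\Omega$, $\widehat\Omega=\Omega\cup\Omega_c$; if $\Omega_c=\partial\Omega$ set $\Omega^*=\Omega$, $\Omega_c^*=\partial\Omega$, otherwise $\Omega^*=\overline\Omega$, $\Omega_c^*=\Omega_c\setminus\partial\Omega$. For $D\subset\mathbb{R}^d$, $C(D)$ denotes the real functions on $D$ that are sequentially continuous relative to $D$ (every function on a discrete set is continuous), and $C_b(D)$ its bounded elements. Let $\mathcal X=C(\overline\Omega)$ if $\Omega_c=\partial\Omega$, and otherwise $\mathcal X=\{w:\widehat\Omega\to\mathbb R:\ w|_{\overline\Omega}\in C(\overline\Omega),\ w|_{\Omega_c^*}\in C_b(\Omega_c^* )\}$, with norm $\|w\|=\sup_{x\in\widehat\Omega}|w(x)|$. Boundary cases: (C1) $X=\{w|_{\Omega^*}: w\in\mathcal X,\ w|_{\Omega_c^*}=0\}$, identified (via zero extension) with the subspace $\{w\in\mathcal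 X: w|_{\Omega_c^*}=0\}$, and $\partial X=C_b(\Omega_c^* )$; (C2) (periodic) $\Omega=\prod_{i=1}^d(a_i,b_i)$ (in (D2), its node set), and $X$ consists of restrictions to $\overline\Omega_+=\prod_i(a_i,b_i]$ of continuous $\Omega$-periodic functions on $\mathbb R^d$ (resp. periodic grid functions), identified with these periodic functions. $X$ carries the sup norm. Operators: $\mathcal L:D(\mathcal L)\to C_b(\Omega^* )$ is linear with $D(\mathcal L)\subset\mathcal X$. In (D1), $D(\mathcal L_0)=\{w\in D(\mathcal L)\cap X:\ \mathcal L w\in X\}$; in (D2), $D(\mathcal L_0)=X$; $\mathcal L_0=\mathcal L|_{D(\mathcal L_0)}:D(\mathcal L_0)\to X$. Assumption (A1): (a) for every $w\in D(\mathcal L)$ and $x_0\in\Omega^*$ with $w(x_0)=\sup_{x\in\widehat\Omega}w(x)$, one has $\mathcal Lw(x_0)\le 0$; (b) $D(\mathcal L_0)$ is dense in $X$; (c) there exists $\lambda_0>0$ such that $\lambda_0\mathcal I-\mathcal L_0:D(\mathcal L_0)\to X$ is surjective. Assumption (A2): $f:C_b(\Omega^* )\to C_b(\Omega^* )$ is given by $f[w](x)=f_0(w(x))$ for a continuously differentiable $f_0:\mathbb R\to\mathbb R$, and there is $\beta>0$ with $f_0(\beta)\le 0\le f_0(-\beta)$. The linear problem defining $w^n$ has a unique solution, so the scheme is well defined. *)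

theory Defs
  imports "HOL-Analysis.Analysis"
begin

type_synonym ('d) pt = "real ^ 'd"

definition lipschitz_boundary :: "('d::finite) pt set \<Rightarrow> bool" where
  "lipschitz_boundary \<Omega> \<longleftrightarrow>
     (\<forall>p\<in>frontier \<Omega>. \<exists>r>0. \<exists>e \<phi> C. norm e = 1 \<and>
        lipschitz_on C {y. y \<bullet> e = 0} \<phi> \<and>
        \<Omega> \<inter> ball p r = {x \<in> ball p r. x \<bullet> e < \<phi> (x - (x \<bullet> e) *\<^sub>R e)})"

definition D1 :: "('d::finite) pt set \<Rightarrow> ('d::finite) pt set \<Rightarrow> bool" where
  "D1 \<Omega> \<Omega>c \<longleftrightarrow> open \<Omega> \<and> connected \<Omega> \<and> bounded \<Omega> \<and> lipschitz_boundary \<Omega> \<and>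
     closed \<Omega>c \<and> connected \<Omega>c \<and> \<Omega>c \<inter> \<Omega> = {} \<and> frontier \<Omega> \<subseteq> \<Omega>c"

text \<open>(D2): the node set of a mesh is modelled as a finite set of points of
the closed region.\<close>
definition D2 :: "('d::finite) pt set \<Rightarrow> ('d::finite) pt set \<Rightarrow> ('d::finite) pt set \<Rightarrow> bool" where
  "D2 \<Omega> bd \<Omega>c \<longleftrightarrow> (\<exists>\<Omega>t \<Omega>ct \<Sigma>. D1 \<Omega>t \<Omega>ct \<and> finite \<Sigma> \<and> \<Sigma> \<subseteq> \<Omega>t \<union> \<Omega>ct \<and>
       \<Omega> = \<Omega>t \<inter> \<Sigma> \<and> bd = frontier \<Omega>t \<inter> \<Sigma> \<and> \<Omega>c = \<Omega>ct \<inter> \<Sigma>)"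

definition domain_setting :: "bool \<Rightarrow> ('d::finite) pt set \<Rightarrow> ('d::finite) pt set \<Rightarrow> ('d::finite) pt set \<Rightarrow> bool" where
  "domain_setting disc \<Omega> bd \<Omega>c \<longleftrightarrow>
     (if disc then D2 \<Omega> bd \<Omega>c else D1 \<Omega> \<Omega>c \<and> bd = frontier \<Omega>)"

definition Ostar :: "('d::finite) pt set \<Rightarrow> ('d::finite) pt set \<Rightarrow> ('d::finite) pt set \<Rightarrow> ('d::finite) pt set" where
  "Ostar \<Omega> bd \<Omega>c = (if \<Omega>c = bd then \<Omega> else \<Omega> \<union> bd)"

definition Ocstar :: "('d::finite) pt set \<Rightarrow> ('d::finite) pt set \<Rightarrow> ('d::finite) pt set \<Rightarrow> ('d::finite) pt set" where
  "Ocstar \<Omega> bd \<Omega>c = (if \<Omega>c = bd then bd else \<Omega>c - bd)"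

definition Cb :: "'a::metric_space set \<Rightarrow> ('a \<Rightarrow> real) \<Rightarrow> bool" where
  "Cb S h \<longleftrightarrow> continuous_on S h \<and> bounded (h ` S)"

definition calX :: "('d::finite) pt set \<Rightarrow> ('d::finite) pt set \<Rightarrow> ('d::finite) pt set \<Rightarrow> (('d::finite) pt \<Rightarrow> real) set" where
  "calX \<Omega> bd \<Omega>c = {w. (\<forall>x. x \<notin> \<Omega> \<union> \<Omega>c \<longrightarrow> w x = 0) \<and> continuous_on (\<Omega> \<union> bd) w \<and>
       (\<Omega>c \<noteq> bd \<longrightarrow> Cb (Ocstar \<Omega> bd \<Omega>c) w)}"

text \<open>Case (C1). Outputs: \<open>\<Omega>\<^sup>*\<close>, \<open>\<Omega>\<^sub>c\<^sup>*\<close>, \<open>\<Omega>\<^sup>^\<close>, \<open>\<X>\<close>, and X (zero-extension identification).\<close>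
definition C1_setting :: "bool \<Rightarrow> ('d::finite) pt set \<Rightarrow> ('d::finite) pt set \<Rightarrow> ('d::finite) pt set \<Rightarrow>
     (('d::finite) pt \<Rightarrow> real) set \<Rightarrow> (('d::finite) pt \<Rightarrow> real) set \<Rightarrow> bool" where
  "C1_setting disc Os Ocs Oh XX X \<longleftrightarrow>
     (\<exists>\<Omega> bd \<Omega>c. domain_setting disc \<Omega> bd \<Omega>c \<and>
        Os = Ostar \<Omega> bd \<Omega>c \<and> Ocs = Ocstar \<Omega> bd \<Omega>c \<and> Oh = \<Omega> \<union> \<Omega>c \<and>
        XX = calX \<Omega> bd \<Omega>c \<and> X = {w \<in> XX. \<forall>x\<in>Ocs. w x = 0})"

definition hbox :: "('d::finite) pt \<Rightarrow> ('d::finite) pt \<Rightarrow> ('d::finite) pt set" where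
  "hbox a b = {x. \<forall>i. a $ i < x $ i \<and> x $ i \<le> b $ i}"

definition periodic_on_box :: "('d::finite) pt \<Rightarrow> ('d::finite) pt \<Rightarrow> (('d::finite) pt \<Rightarrow> real) \<Rightarrow> bool" where
  "periodic_on_box a b w \<longleftrightarrow> (\<forall>x i. w (x + (b $ i - a $ i) *\<^sub>R axis i 1) = w x)"

text \<open>Continuous version: X = continuous periodic functions on
  \<open>\<real>\<^sup>d\<close>, norm/evaluation on the half-open box.\<close>
definition C2_setting :: "bool \<Rightarrow> ('d::finite) pt set \<Rightarrow> ('d::finite) pt set \<Rightarrow> ('d::finite) pt set \<Rightarrow>
     (('d::finite) pt \<Rightarrow> real) set \<Rightarrow> (('d::finite) pt \<Rightarrow> real) set \<Rightarrow> bool" where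
  "C2_setting disc Os Ocs Oh XX X \<longleftrightarrow>
     (\<exists>a b. (\<forall>i. a $ i < b $ i) \<and> Ocs = {} \<and> Oh = Os \<and> XX = X \<and>
        (if disc then (\<exists>\<Sigma>. finite \<Sigma> \<and> \<Sigma> \<subseteq> cbox a b \<and> Os = \<Sigma> \<inter> hbox a b \<and>
                         X = {w. \<forall>x. x \<notin> Os \<longrightarrow> w x = 0})
         else Os = hbox a b \<and> X = {w. continuous_on UNIV w \<and> periodic_on_box a b w}))"

end

theory Submission
  imports Defs
begin


definition maxex :: "('a \<Rightarrow> real) \<Rightarrow> 'a set \<Rightarrow> bool" where
  "maxex h K \<longleftrightarrow> (K \<noteq> {} \<longrightarrow> (\<exists>x0\<in>K. \<forall>x\<in>K. h x \<le> h x0))"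

lemma maxex_finite: "finite K \<Longrightarrow> maxex h K"
  unfolding maxex_def
proof (intro impI)
  assume "finite K" "K \<noteq> {}"
  then have "Max (h ` K) \<in> h ` K" by simp
  then obtain x0 where "x0 \<in> K" "h x0 = Max (h ` K)" by force
  then show "\<exists>x0\<in>K. \<forall>x\<in>K. h x \<le> h x0" using \<open>finite K\<close>
    by (intro bexI[of _ x0]) (auto intro: Max_ge)
qed

lemma maxex_compact: "compact K \<Longrightarrow> continuous_on K h \<Longrightarrow> maxex h K"
  unfolding maxex_def using continuous_attains_sup by blast

lemma per_sum:
  fixes h :: "('d::finite) pt \<Rightarrow> real"
  assumes "periodic_on_box a b h" "finite I"
  shows "h (y + (\<Sum>i\<in>I. (b$i - a$i) *\<^sub>R axis i 1)) = h y"
  using assms(2)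
proof (induction I rule: finite_induct)
  case empty then show ?case by simp
next
  case (insert i F)
  have "y + (\<Sum>i\<in>insert i F. (b$i - a$i) *\<^sub>R axis i 1)
      = (y + (\<Sum>i\<in>F. (b$i - a$i) *\<^sub>R axis i 1)) + (b$i - a$i) *\<^sub>R axis i 1"
    using insert by (simp add: algebra_simps)
  moreover have "h ((y + (\<Sum>i\<in>F. (b$i - a$i) *\<^sub>R axis i 1)) + (b$i - a$i) *\<^sub>R axis i 1)
      = h (y + (\<Sum>i\<in>F. (b$i - a$i) *\<^sub>R axis i 1))"
    using assms(1) unfolding periodic_on_box_def by blast
  ultimately show ?case using insert.IH by (simp add: add.assoc)
qed

lemma sum_axis_comp:
  fixes c :: "'d::finite \<Rightarrow> real"
  shows "(\<Sum>i\<in>I. c i *\<^sub>R (axis i 1 :: real^'d)) $ j = (if j \<in> I then c j else 0)"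
proof -
  have e: "\<And>x. c x * (if j = x then 1 else 0) = (if j = x then c x else 0)" by auto
  show ?thesis by (simp add: axis_def e)
qed

lemma maxex_periodic:
  fixes h :: "('d::finite) pt \<Rightarrow> real"
  assumes "continuous_on UNIV h" "periodic_on_box a b h" "\<forall>i. a$i < b$i"
  shows "maxex h (hbox a b)"
proof -
  have "a \<in> cbox a b" using assms(3) by (simp add: mem_box_cart less_imp_le)
  then have "cbox a b \<noteq> {}" by blast
  then obtain y0 where y0: "y0 \<in> cbox a b" "\<forall>y\<in>cbox a b. h y \<le> h y0"
  proof -
    have "continuous_on (cbox a b) h" by (rule continuous_on_subset[OF assms(1)]) simp
    from continuous_attains_sup[OF compact_cbox \<open>cbox a b \<noteq> {}\<close> this] that show ?thesis by blast
  qed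
  define I where "I = {i. y0$i = a$i}"
  define y1 where "y1 = y0 + (\<Sum>i\<in>I. (b$i - a$i) *\<^sub>R axis i 1)"
  have hy: "h y1 = h y0" unfolding y1_def using per_sum[OF assms(2)] by simp
  have "y1 \<in> hbox a b"
    unfolding hbox_def
  proof (clarify)
    fix i
    have c: "y1 $ i = y0 $ i + (if i \<in> I then b$i - a$i else 0)"
      unfolding y1_def using sum_axis_comp[of "\<lambda>i. b$i - a$i" I i] by simp
    show "a $ i < y1 $ i \<and> y1 $ i \<le> b $ i"
      using y0(1) assms(3) c unfolding I_def by (auto simp: mem_box_cart dest!: spec[of _ i])
  qed
  moreover have "hbox a b \<subseteq> cbox a b" by (auto simp: hbox_def mem_box_cart less_imp_le)
  ultimately have "\<forall>x\<in>hbox a b. h x \<le> h y1" using y0(2) hy by auto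
  with \<open>y1 \<in> hbox a b\<close> show ?thesis unfolding maxex_def by blast
qed



lemma setting_K:
  fixes Os Ocs Oh :: "('d::finite) pt set" and XX X :: "(('d::finite) pt \<Rightarrow> real) set"
  assumes "C1_setting disc Os Ocs Oh XX X \<or> C2_setting disc Os Ocs Oh XX X"
  shows "\<exists>K. Os \<subseteq> K \<and> K \<subseteq> Oh \<and> Oh \<subseteq> Os \<union> Ocs \<and> (\<forall>h\<in>XX. maxex h K \<and> maxex (\<lambda>x. - h x) K)"
  using assms
proof
  assume "C1_setting disc Os Ocs Oh XX X"
  then obtain \<Omega> bd \<Omega>c where ds: "domain_setting disc \<Omega> bd \<Omega>c" and
    e: "Os = Ostar \<Omega> bd \<Omega>c" "Ocs = Ocstar \<Omega> bd \<Omega>c" "Oh = \<Omega> \<union> \<Omega>c" "XX = calX \<Omega> bd \<Omega>c"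
    unfolding C1_setting_def by blast
  have bdsub: "bd \<subseteq> \<Omega>c"
  proof (cases disc)
    case True
    then show ?thesis using ds unfolding domain_setting_def D2_def D1_def by auto
  next
    case False
    then show ?thesis using ds unfolding domain_setting_def D1_def by auto
  qed
  have s1: "Os \<subseteq> \<Omega> \<union> bd" "\<Omega> \<union> bd \<subseteq> Oh" "Oh \<subseteq> Os \<union> Ocs"
    using bdsub e by (auto simp: Ostar_def Ocstar_def)
  show ?thesis
  proof (cases disc)
    case True
    then obtain \<Sigma> where "finite \<Sigma>" "Oh \<subseteq> \<Sigma>"
      using ds e unfolding domain_setting_def D2_def by auto
    then have "finite Oh" by (rule finite_subset[rotated])
    then show ?thesis using s1 by (intro exI[of _ Oh]) (auto intro: maxex_finite)
  next
    case False
    then have d1: "D1 \<Omega> \<Omega>c" "bd = frontier \<Omega>" using ds unfolding domain_setting_def by auto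
    then have "\<Omega> \<union> bd = closure \<Omega>" by (simp add: closure_Un_frontier)
    moreover have "bounded \<Omega>" using d1 unfolding D1_def by auto
    ultimately have cK: "compact (\<Omega> \<union> bd)" by (simp add: compact_closure)
    have "\<forall>h\<in>XX. maxex h (\<Omega> \<union> bd) \<and> maxex (\<lambda>x. - h x) (\<Omega> \<union> bd)"
    proof
      fix h assume "h \<in> XX"
      then have "continuous_on (\<Omega> \<union> bd) h" using e unfolding calX_def by auto
      then show "maxex h (\<Omega> \<union> bd) \<and> maxex (\<lambda>x. - h x) (\<Omega> \<union> bd)"
        using cK by (auto intro!: maxex_compact continuous_intros)
    qed
    then show ?thesis using s1 by (intro exI[of _ "\<Omega> \<union> bd"]) auto
  qed
next
  assume "C2_setting disc Os Ocs Oh XX X"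
  then obtain a b where ab: "\<forall>i. a $ i < b $ i" "Ocs = {}" "Oh = Os" "XX = X" and
     c: "if disc then (\<exists>\<Sigma>. finite \<Sigma> \<and> \<Sigma> \<subseteq> cbox a b \<and> Os = \<Sigma> \<inter> hbox a b \<and>
                         X = {w. \<forall>x. x \<notin> Os \<longrightarrow> w x = 0})
         else Os = hbox a b \<and> X = {w. continuous_on UNIV w \<and> periodic_on_box a b w}"
    unfolding C2_setting_def by blast
  show ?thesis
  proof (cases disc)
    case True
    then have "finite Os" using c by auto
    then show ?thesis using ab by (intro exI[of _ Os]) (auto intro: maxex_finite)
  next
    case False
    then have c': "Os = hbox a b" "X = {w. continuous_on UNIV w \<and> periodic_on_box a b w}" using c by auto
    have "\<forall>h\<in>XX. maxex h Os \<and> maxex (\<lambda>x. - h x) Os"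
    proof
      fix h assume "h \<in> XX"
      then have h: "continuous_on UNIV h" "periodic_on_box a b h" using c' ab by auto
      have "continuous_on UNIV (\<lambda>x. - h x)" using h(1) by (intro continuous_intros)
      moreover have "periodic_on_box a b (\<lambda>x. - h x)" using h(2) by (simp add: periodic_on_box_def)
      ultimately have "maxex (\<lambda>x. - h x) (hbox a b)" using ab(1) by (rule maxex_periodic)
      moreover have "maxex h (hbox a b)" using h ab(1) by (rule maxex_periodic)
      ultimately show "maxex h Os \<and> maxex (\<lambda>x. - h x) Os" using c'(1) by simp
    qed
    then show ?thesis using ab by (intro exI[of _ Os]) auto
  qed
qed

lemma attain_abs:
  fixes h :: "'a \<Rightarrow> real"
  assumes "Os \<subseteq> K" "K \<subseteq> Oh" "Oh \<subseteq> Os \<union> Ocs" "maxex h K"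
    "\<forall>x\<in>Ocs. h x \<le> \<beta>" "\<forall>x\<in>Oh. h x \<le> c" "c > \<beta>" "\<forall>\<eta>>0. \<exists>x\<in>Oh. h x > c - \<eta>"
  shows "\<exists>x0\<in>Os. h x0 = c"
proof -
  have "c - \<beta> > 0" using assms(7) by simp
  then obtain x where x0': "x \<in> Oh" "h x > c - (c - \<beta>)" using assms(8) by blast
  then have x: "x \<in> Oh" "h x > \<beta>" by auto
  then have "x \<in> Os" using assms(3,5) by force
  then have "K \<noteq> {}" using assms(1) by blast
  then obtain x0 where x0: "x0 \<in> K" "\<forall>y\<in>K. h y \<le> h x0" using assms(4) unfolding maxex_def by blast
  have "h x0 \<ge> c"
  proof (rule ccontr)
    assume "\<not> c \<le> h x0"
    then have "c - max (h x0) \<beta> > 0" using assms(7) by simp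
    then obtain y where y: "y \<in> Oh" "h y > c - (c - max (h x0) \<beta>)"
      using assms(8) by blast
    then have y': "h y > h x0" "h y > \<beta>" by auto
    then have "y \<notin> Ocs" using assms(5) by force
    then have "y \<in> K" using y(1) assms(1,3) by blast
    then show False using y'(1) x0(2) by force
  qed
  moreover have "h x0 \<le> c" using x0 assms(2,6) by blast
  ultimately have "h x0 = c" by simp
  moreover have "x0 \<in> Os" using x0(1) assms(2,3,5,7) \<open>h x0 = c\<close> by force
  ultimately show ?thesis by blast
qed



lemma time_lemma:
  fixes z zs :: "real \<Rightarrow> 'a \<Rightarrow> real" and Os Oh :: "'a set"
  assumes tau: "\<tau> > 0" and kap: "\<kappa> \<ge> 0"
    and init: "\<forall>x\<in>Oh. z 0 x \<le> \<beta>"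
    and OsOh: "Os \<subseteq> Oh"
    and attain: "\<And>s c. s \<in> {0<..\<tau>} \<Longrightarrow> c > \<beta> \<Longrightarrow> (\<forall>x\<in>Oh. z s x \<le> c) \<Longrightarrow>
                   (\<forall>\<eta>>0. \<exists>x\<in>Oh. z s x > c - \<eta>) \<Longrightarrow> \<exists>x0\<in>Os. z s x0 = c"
    and cont: "\<And>s \<epsilon>. s \<in> {0..\<tau>} \<Longrightarrow> \<epsilon> > 0 \<Longrightarrow>
                  \<exists>\<delta>>0. \<forall>s'\<in>{0..\<tau>}. \<bar>s' - s\<bar> < \<delta> \<longrightarrow> (\<forall>x\<in>Oh. \<bar>z s' x - z s x\<bar> \<le> \<epsilon>)"
    and deriv: "\<And>s \<epsilon>. s \<in> {0<..\<tau>} \<Longrightarrow> \<epsilon> > 0 \<Longrightarrow>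
                  \<exists>\<delta>>0. \<forall>h. h \<noteq> 0 \<and> \<bar>h\<bar> < \<delta> \<and> s + h \<in> {0..\<tau>} \<longrightarrow>
                     (\<forall>x\<in>Os. \<bar>(z (s + h) x - z s x) / h - zs s x\<bar> \<le> \<epsilon>)"
    and maxp: "\<And>s x0. s \<in> {0<..\<tau>} \<Longrightarrow> x0 \<in> Os \<Longrightarrow> (\<forall>x\<in>Oh. z s x \<le> z s x0) \<Longrightarrow>
                  z s x0 > \<beta> \<Longrightarrow> zs s x0 \<le> \<kappa> * \<beta> - \<kappa> * z s x0"
  shows "\<forall>s\<in>{0..\<tau>}. \<forall>x\<in>Oh. z s x \<le> \<beta>"
proof (rule ccontr)
  assume "\<not> ?thesis"
  then obtain s1 x1 where s1: "s1 \<in> {0..\<tau>}" "x1 \<in> Oh" "z s1 x1 > \<beta>" by force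
  define \<epsilon> where "\<epsilon> = (z s1 x1 - \<beta>) / (2 * (1 + s1))"
  have ep: "\<epsilon> > 0" using s1 by (simp add: \<epsilon>_def)
  have "\<epsilon> * (1 + s1) = (z s1 x1 - \<beta>) / 2" using s1 by (simp add: \<epsilon>_def field_simps)
  moreover have "(z s1 x1 - \<beta>) / 2 < z s1 x1 - \<beta>" using s1 by simp
  ultimately have s1S: "z s1 x1 > \<beta> + \<epsilon> * (1 + s1)" by linarith
  define S where "S = {s\<in>{0..\<tau>}. \<exists>x\<in>Oh. z s x > \<beta> + \<epsilon> * (1 + s)}"
  define t where "t = Inf S"
  have s1in: "s1 \<in> S" using s1 s1S unfolding S_def by blast
  have bdd: "bdd_below S" unfolding S_def by (rule bdd_belowI[of _ 0]) auto
  have lower: "\<And>s. s \<in> S \<Longrightarrow> t \<le> s" unfolding t_def using bdd by (simp add: cInf_lower)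
  have near: "\<And>\<delta>. \<delta> > 0 \<Longrightarrow> \<exists>s\<in>S. s < t + \<delta>"
  proof -
    fix \<delta> :: real assume "\<delta> > 0"
    then have "Inf S < t + \<delta>" unfolding t_def by simp
    moreover have "S \<noteq> {}" using s1in by blast
    ultimately show "\<exists>s\<in>S. s < t + \<delta>" using cInf_less_iff[of S "t + \<delta>"] bdd by blast
  qed
  have t_le: "t \<le> \<tau>" using lower[OF s1in] s1 by auto
  have z0: "0 \<in> {0..\<tau>}" using tau by simp
  obtain \<delta>0 where d0: "\<delta>0 > 0" "\<forall>s'\<in>{0..\<tau>}. \<bar>s' - 0\<bar> < \<delta>0 \<longrightarrow> (\<forall>x\<in>Oh. \<bar>z s' x - z 0 x\<bar> \<le> \<epsilon>)"
    using cont[OF z0 ep] by blast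
  have "\<forall>s\<in>S. \<delta>0 \<le> s"
  proof
    fix s assume sS: "s \<in> S"
    show "\<delta>0 \<le> s"
    proof (rule ccontr)
      assume "\<not> \<delta>0 \<le> s"
      from sS obtain x where x: "s \<in> {0..\<tau>}" "x \<in> Oh" "z s x > \<beta> + \<epsilon> * (1 + s)" unfolding S_def by blast
      have "\<bar>s - 0\<bar> < \<delta>0" using x(1) \<open>\<not> \<delta>0 \<le> s\<close> by simp
      then have "\<bar>z s x - z 0 x\<bar> \<le> \<epsilon>" using d0(2) x(1,2) by blast
      then have "z s x - z 0 x \<le> \<epsilon>" by (rule abs_le_D1)
      moreover have "z 0 x \<le> \<beta>" using init x by auto
      moreover have "\<epsilon> * (1 + s) \<ge> \<epsilon>" using ep x by simp
      ultimately show False using x by linarith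
    qed
  qed
  moreover have "S \<noteq> {}" using s1in by blast
  ultimately have "\<delta>0 \<le> t" unfolding t_def using cInf_greatest[of S \<delta>0] by blast
  then have tpos: "t > 0" using d0 by linarith
  define c where "c = \<beta> + \<epsilon> * (1 + t)"
  have cb: "c > \<beta>" using ep tpos by (simp add: c_def)
  have t_in: "t \<in> {0<..\<tau>}" "t \<in> {0..\<tau>}" using tpos t_le by auto
  have le_c: "\<forall>x\<in>Oh. z t x \<le> c"
  proof
    fix x assume x: "x \<in> Oh"
    show "z t x \<le> c"
    proof (rule ccontr)
      assume "\<not> z t x \<le> c"
      define \<eta> where "\<eta> = (z t x - c) / 2"
      have eta: "\<eta> > 0" using \<open>\<not> z t x \<le> c\<close> by (simp add: \<eta>_def)
      obtain \<delta> where d: "\<delta> > 0" "\<forall>s'\<in>{0..\<tau>}. \<bar>s' - t\<bar> < \<delta> \<longrightarrow> (\<forall>x\<in>Oh. \<bar>z s' x - z t x\<bar> \<le> \<eta>)"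
        using cont[OF t_in(2) eta] by blast
      define s where "s = t - min \<delta> t / 2"
      have m: "0 < min \<delta> t" "min \<delta> t \<le> \<delta>" "min \<delta> t \<le> t" using d(1) tpos by auto
      have s: "s \<in> {0..\<tau>}" "\<bar>s - t\<bar> < \<delta>" "s < t" using m t_le unfolding s_def by auto
      have "\<bar>z s x - z t x\<bar> \<le> \<eta>" using d s x by blast
      then have "- (z s x - z t x) \<le> \<eta>" by (rule abs_le_D2)
      then have "z t x - z s x \<le> \<eta>" by simp
      moreover have "z t x - \<eta> > c" unfolding \<eta>_def using \<open>\<not> z t x \<le> c\<close> by (simp add: field_simps)
      ultimately have "z s x > c" by linarith
      moreover have "\<beta> + \<epsilon> * (1 + s) \<le> c" using s ep unfolding c_def by (simp add: mult_left_mono)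
      ultimately have "z s x > \<beta> + \<epsilon> * (1 + s)" by linarith
      then have "s \<in> S" using s(1) x unfolding S_def by blast
      then show False using lower[of s] s(3) by linarith
    qed
  qed
  have approx: "\<forall>\<eta>>0. \<exists>x\<in>Oh. z t x > c - \<eta>"
  proof (intro allI impI)
    fix \<eta> :: real assume eta: "\<eta> > 0"
    then have eta2: "\<eta>/2 > 0" by simp
    obtain \<delta> where d: "\<delta> > 0" "\<forall>s'\<in>{0..\<tau>}. \<bar>s' - t\<bar> < \<delta> \<longrightarrow> (\<forall>x\<in>Oh. \<bar>z s' x - z t x\<bar> \<le> \<eta>/2)"
      using cont[OF t_in(2) eta2] by blast
    obtain s where s: "s \<in> S" "s < t + \<delta>" using near d(1) by blast
    have "t \<le> s" using lower s by blast
    from s obtain x where x: "s \<in> {0..\<tau>}" "x \<in> Oh" "z s x > \<beta> + \<epsilon> * (1 + s)" unfolding S_def by blast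
    have "\<bar>s - t\<bar> < \<delta>" using s(2) \<open>t \<le> s\<close> by simp
    then have "\<bar>z s x - z t x\<bar> \<le> \<eta>/2" using d(2) x(1,2) by blast
    then have "z s x - z t x \<le> \<eta>/2" by (rule abs_le_D1)
    moreover have "\<beta> + \<epsilon> * (1 + s) \<ge> c" using \<open>t \<le> s\<close> ep unfolding c_def by (simp add: mult_left_mono)
    ultimately have "z t x > c - \<eta>" using x(3) eta by linarith
    then show "\<exists>x\<in>Oh. z t x > c - \<eta>" using x(2) by blast
  qed
  obtain x0 where x0: "x0 \<in> Os" "z t x0 = c" using attain[OF t_in(1) cb le_c approx] by blast
  have zs_le: "zs t x0 \<le> \<kappa> * \<beta> - \<kappa> * c" using maxp[OF t_in(1) x0(1)] le_c x0(2) cb by simp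
  have "\<kappa> * \<beta> - \<kappa> * c \<le> 0" using kap cb by (simp add: mult_left_mono)
  with zs_le have zs0: "zs t x0 \<le> 0" by linarith
  have ep2: "\<epsilon>/2 > 0" using ep by simp
  obtain \<delta> where d: "\<delta> > 0" "\<forall>h. h \<noteq> 0 \<and> \<bar>h\<bar> < \<delta> \<and> t + h \<in> {0..\<tau>} \<longrightarrow>
                     (\<forall>x\<in>Os. \<bar>(z (t + h) x - z t x) / h - zs t x\<bar> \<le> \<epsilon>/2)"
    using deriv[OF t_in(1) ep2] by blast
  define h where "h = - (min \<delta> t / 2)"
  have m: "0 < min \<delta> t" "min \<delta> t \<le> \<delta>" "min \<delta> t \<le> t" using d(1) tpos by auto
  have h: "h < 0" "\<bar>h\<bar> < \<delta>" "t + h \<in> {0..\<tau>}" using m t_le unfolding h_def by auto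
  have hne: "h \<noteq> 0" using h(1) by simp
  have q: "\<bar>(z (t + h) x0 - z t x0) / h - zs t x0\<bar> \<le> \<epsilon>/2" using d(2) hne h(2,3) x0(1) by blast
  then have q': "(z (t + h) x0 - z t x0) / h - zs t x0 \<le> \<epsilon>/2" by (rule abs_le_D1)
  have "t + h \<notin> S" using lower[of "t + h"] h(1) by linarith
  moreover have "x0 \<in> Oh" using x0(1) OsOh by blast
  ultimately have "z (t + h) x0 \<le> \<beta> + \<epsilon> * (1 + (t + h))" using h(3) unfolding S_def by (simp add: not_less)
  then have "z (t + h) x0 - z t x0 \<le> \<epsilon> * h" using x0(2) unfolding c_def by (simp add: algebra_simps)
  then have "(z (t + h) x0 - z t x0) / h \<ge> \<epsilon>" using h(1) by (simp add: pos_le_divide_eq neg_le_divide_eq)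
  then show False using q' zs0 ep by linarith
qed



lemma neg_quot: "\<bar>(- a - - b) / h - - d\<bar> = \<bar>(a - b) / (h::real) - d\<bar>"
proof -
  have "(- a - - b) / h - - d = - ((a - b) / h - d)" by (simp add: diff_divide_distrib)
  then show ?thesis by simp
qed

theorem theorem3p1:
  fixes Os Ocs Oh :: "('d::finite) pt set"
    and XX X DL DL0 :: "(('d::finite) pt \<Rightarrow> real) set"
    and L :: "(('d::finite) pt \<Rightarrow> real) \<Rightarrow> (('d::finite) pt \<Rightarrow> real)"
    and f0 f0' :: "real \<Rightarrow> real"
    and \<beta> \<kappa> \<tau> :: real
    and u0 :: "('d::finite) pt \<Rightarrow> real"
    and g :: "real \<Rightarrow> ('d::finite) pt \<Rightarrow> real"
    and v :: "nat \<Rightarrow> ('d::finite) pt \<Rightarrow> real"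
    and w ws :: "nat \<Rightarrow> real \<Rightarrow> ('d::finite) pt \<Rightarrow> real"
  assumes setting: "C1_setting disc Os Ocs Oh XX X \<or> C2_setting disc Os Ocs Oh XX X"
    and DL_sub: "DL \<subseteq> XX"
    and DL_zero: "(\<lambda>x. 0) \<in> DL"
    and DL_lin: "\<And>w1 w2 c. w1 \<in> DL \<Longrightarrow> w2 \<in> DL \<Longrightarrow> (\<lambda>x. w1 x + c * w2 x) \<in> DL"
    and L_lin: "\<And>w1 w2 c x. w1 \<in> DL \<Longrightarrow> w2 \<in> DL \<Longrightarrow> x \<in> Os \<Longrightarrow>
                  L (\<lambda>y. w1 y + c * w2 y) x = L w1 x + c * L w2 x"
    and L_Cb: "\<And>w. w \<in> DL \<Longrightarrow> Cb Os (L w)"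
    and DL0_def: "DL0 = (if disc then X else {z \<in> DL \<inter> X. \<exists>h\<in>X. \<forall>x\<in>Os. h x = L z x})"
    and disc_dom: "disc \<Longrightarrow> X \<subseteq> DL"
    and A1a: "\<And>z x0. z \<in> DL \<Longrightarrow> x0 \<in> Os \<Longrightarrow> (\<forall>x\<in>Oh. z x \<le> z x0) \<Longrightarrow> L z x0 \<le> 0"
    and A1b: "\<And>h \<epsilon>. h \<in> X \<Longrightarrow> \<epsilon> > 0 \<Longrightarrow> \<exists>z\<in>DL0. \<forall>x\<in>Oh. \<bar>h x - z x\<bar> \<le> \<epsilon>"
    and A1c: "\<exists>lam0>0. \<forall>h\<in>X. \<exists>z\<in>DL0. \<forall>x\<in>Os. lam0 * z x - L z x = h x"
    and f0_deriv: "\<And>\<xi>. (f0 has_real_derivative f0' \<xi>) (at \<xi>)"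
    and f0'_cont: "continuous_on UNIV f0'"
    and \<beta>_pos: "\<beta> > 0"
    and f0_\<beta>: "f0 \<beta> \<le> 0" "0 \<le> f0 (- \<beta>)"
    and \<kappa>: "\<And>\<xi>. \<bar>\<xi>\<bar> \<le> \<beta> \<Longrightarrow> \<bar>f0' \<xi>\<bar> \<le> \<kappa>"
    and u0_X: "u0 \<in> XX"
    and u0_bd: "\<And>x. x \<in> Oh \<Longrightarrow> \<bar>u0 x\<bar> \<le> \<beta>"
    and g_Cb: "\<And>t. t \<ge> 0 \<Longrightarrow> Cb Ocs (g t)"
    and g_cont: "\<And>t \<epsilon>. t \<ge> 0 \<Longrightarrow> \<epsilon> > 0 \<Longrightarrow>
                  \<exists>\<delta>>0. \<forall>t'\<ge>0. \<bar>t' - t\<bar> < \<delta> \<longrightarrow> (\<forall>x\<in>Ocs. \<bar>g t' x - g t x\<bar> \<le> \<epsilon>)"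
    and g_init: "\<And>x. x \<in> Ocs \<Longrightarrow> g 0 x = u0 x"
    and g_bd: "\<And>t x. t \<ge> 0 \<Longrightarrow> x \<in> Ocs \<Longrightarrow> \<bar>g t x\<bar> \<le> \<beta>"
    and \<tau>_pos: "\<tau> > 0"
    and v0: "v 0 = u0"
    and v_step: "\<And>n. v (Suc n) = w n \<tau>"
    and w_X: "\<And>n s. s \<in> {0..\<tau>} \<Longrightarrow> w n s \<in> XX"
    and w_cont: "\<And>n s \<epsilon>. s \<in> {0..\<tau>} \<Longrightarrow> \<epsilon> > 0 \<Longrightarrow>
                  \<exists>\<delta>>0. \<forall>s'\<in>{0..\<tau>}. \<bar>s' - s\<bar> < \<delta> \<longrightarrow> (\<forall>x\<in>Oh. \<bar>w n s' x - w n s x\<bar> \<le> \<epsilon>)"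
    and w_DL: "\<And>n s. s \<in> {0<..\<tau>} \<Longrightarrow> w n s \<in> DL"
    and w_deriv: "\<And>n s \<epsilon>. s \<in> {0<..\<tau>} \<Longrightarrow> \<epsilon> > 0 \<Longrightarrow>
                  \<exists>\<delta>>0. \<forall>h. h \<noteq> 0 \<and> \<bar>h\<bar> < \<delta> \<and> s + h \<in> {0..\<tau>} \<longrightarrow>
                     (\<forall>x\<in>Os. \<bar>(w n (s + h) x - w n s x) / h - ws n s x\<bar> \<le> \<epsilon>)"
    and w_eq: "\<And>n s x. s \<in> {0<..\<tau>} \<Longrightarrow> x \<in> Os \<Longrightarrow>
                  ws n s x + \<kappa> * w n s x = L (w n s) x + (\<kappa> * v n x + f0 (v n x))"
    and w_bc: "\<And>n s x. s \<in> {0..\<tau>} \<Longrightarrow> x \<in> Ocs \<Longrightarrow> w n s x = g (real n * \<tau> + s) x"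
    and w_init: "\<And>n x. x \<in> Oh \<Longrightarrow> w n 0 x = v n x"
  shows "\<forall>n. \<forall>x\<in>Oh. \<bar>v n x\<bar> \<le> \<beta>"
proof -
  obtain K where K: "Os \<subseteq> K" "K \<subseteq> Oh" "Oh \<subseteq> Os \<union> Ocs"
    "\<And>h. h \<in> XX \<Longrightarrow> maxex h K \<and> maxex (\<lambda>x. - h x) K"
    using setting_K[OF setting] by blast
  have OsOh: "Os \<subseteq> Oh" using K by blast
  have kap: "\<kappa> \<ge> 0" using \<kappa>[of 0] \<beta>_pos by force
  have L0: "\<And>x. x \<in> Os \<Longrightarrow> L (\<lambda>x. 0) x = 0"
  proof -
    fix x assume "x \<in> Os"
    from L_lin[OF DL_zero DL_zero this, of 1] show "L (\<lambda>x. 0) x = 0" by simp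
  qed
  define \<phi> where "\<phi> = (\<lambda>\<xi>. \<kappa> * \<xi> + f0 \<xi>)"
  have mono: "\<And>a b. -\<beta> \<le> a \<Longrightarrow> a \<le> b \<Longrightarrow> b \<le> \<beta> \<Longrightarrow> \<phi> a \<le> \<phi> b"
  proof -
    fix a b assume ab: "-\<beta> \<le> a" "a \<le> b" "b \<le> \<beta>"
    show "\<phi> a \<le> \<phi> b"
    proof (rule DERIV_nonneg_imp_nondecreasing[OF ab(2)])
      fix x assume x: "a \<le> x" "x \<le> b"
      have "(\<phi> has_real_derivative (\<kappa> + f0' x)) (at x)"
        unfolding \<phi>_def using f0_deriv[of x] by (auto intro!: derivative_eq_intros)
      moreover have "\<bar>f0' x\<bar> \<le> \<kappa>" using \<kappa>[of x] x ab by simp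
      ultimately show "\<exists>y. (\<phi> has_real_derivative y) (at x) \<and> 0 \<le> y" by force
    qed
  qed
  have phi_bd: "\<And>\<xi>. \<bar>\<xi>\<bar> \<le> \<beta> \<Longrightarrow> \<phi> \<xi> \<le> \<kappa> * \<beta> \<and> - (\<kappa> * \<beta>) \<le> \<phi> \<xi>"
  proof -
    fix \<xi> :: real assume "\<bar>\<xi>\<bar> \<le> \<beta>"
    then have "\<phi> \<xi> \<le> \<phi> \<beta>" "\<phi> (-\<beta>) \<le> \<phi> \<xi>" using mono by auto
    then show "\<phi> \<xi> \<le> \<kappa> * \<beta> \<and> - (\<kappa> * \<beta>) \<le> \<phi> \<xi>" using f0_\<beta> unfolding \<phi>_def by auto
  qed
  have step: "\<forall>x\<in>Oh. \<bar>w n \<tau> x\<bar> \<le> \<beta>" if IH: "\<forall>x\<in>Oh. \<bar>v n x\<bar> \<le> \<beta>" for n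
  proof -
    have Fb: "\<And>x. x \<in> Os \<Longrightarrow> \<phi> (v n x) \<le> \<kappa> * \<beta> \<and> - (\<kappa> * \<beta>) \<le> \<phi> (v n x)"
      using phi_bd IH OsOh by blast
    have bcb: "\<And>s x. s \<in> {0..\<tau>} \<Longrightarrow> x \<in> Ocs \<Longrightarrow> \<bar>w n s x\<bar> \<le> \<beta>"
    proof -
      fix s x assume "s \<in> {0..\<tau>}" "x \<in> Ocs"
      moreover have "real n * \<tau> + s \<ge> 0" using \<tau>_pos \<open>s \<in> {0..\<tau>}\<close> by simp
      ultimately show "\<bar>w n s x\<bar> \<le> \<beta>" using w_bc g_bd by simp
    qed
    have up: "\<forall>s\<in>{0..\<tau>}. \<forall>x\<in>Oh. w n s x \<le> \<beta>"
    proof (rule time_lemma[OF \<tau>_pos kap _ OsOh, where zs = "ws n"])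
      show "\<forall>x\<in>Oh. w n 0 x \<le> \<beta>" using w_init IH by force
      show "\<exists>x0\<in>Os. w n s x0 = c"
        if "s \<in> {0<..\<tau>}" "c > \<beta>" "\<forall>x\<in>Oh. w n s x \<le> c" "\<forall>\<eta>>0. \<exists>x\<in>Oh. w n s x > c - \<eta>" for s c
      proof (rule attain_abs[OF K(1,2,3)])
        have s01: "s \<in> {0..\<tau>}" using that(1) by simp
        show "maxex (w n s) K" using K(4)[OF w_X[OF s01]] by (rule conjunct1)
        show "\<forall>x\<in>Ocs. w n s x \<le> \<beta>"
        proof
          fix x assume "x \<in> Ocs"
          then have "\<bar>w n s x\<bar> \<le> \<beta>" by (rule bcb[OF s01])
          then show "w n s x \<le> \<beta>" by (rule abs_le_D1)
        qed
      qed (rule that)+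
      show "\<exists>\<delta>>0. \<forall>s'\<in>{0..\<tau>}. \<bar>s' - s\<bar> < \<delta> \<longrightarrow> (\<forall>x\<in>Oh. \<bar>w n s' x - w n s x\<bar> \<le> \<epsilon>)"
        if "s \<in> {0..\<tau>}" "\<epsilon> > 0" for s \<epsilon> using w_cont that by blast
      show "\<exists>\<delta>>0. \<forall>h. h \<noteq> 0 \<and> \<bar>h\<bar> < \<delta> \<and> s + h \<in> {0..\<tau>} \<longrightarrow>
                     (\<forall>x\<in>Os. \<bar>(w n (s + h) x - w n s x) / h - ws n s x\<bar> \<le> \<epsilon>)"
        if "s \<in> {0<..\<tau>}" "\<epsilon> > 0" for s \<epsilon> using w_deriv that by blast
      show "ws n s x0 \<le> \<kappa> * \<beta> - \<kappa> * w n s x0"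
        if "s \<in> {0<..\<tau>}" "x0 \<in> Os" "\<forall>x\<in>Oh. w n s x \<le> w n s x0" "w n s x0 > \<beta>" for s x0
      proof -
        have "L (w n s) x0 \<le> 0" using A1a[OF w_DL[OF that(1)] that(2,3)] .
        moreover have "ws n s x0 + \<kappa> * w n s x0 = L (w n s) x0 + \<phi> (v n x0)"
          using w_eq[OF that(1,2)] unfolding \<phi>_def by simp
        ultimately show ?thesis using Fb[OF that(2)] by linarith
      qed
    qed
    have down: "\<forall>s\<in>{0..\<tau>}. \<forall>x\<in>Oh. (\<lambda>s x. - w n s x) s x \<le> \<beta>"
    proof (rule time_lemma[OF \<tau>_pos kap _ OsOh, where zs = "\<lambda>s x. - ws n s x"])
      show "\<forall>x\<in>Oh. - w n 0 x \<le> \<beta>" using w_init IH by force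
      show "\<exists>x0\<in>Os. - w n s x0 = c"
        if "s \<in> {0<..\<tau>}" "c > \<beta>" "\<forall>x\<in>Oh. - w n s x \<le> c" "\<forall>\<eta>>0. \<exists>x\<in>Oh. - w n s x > c - \<eta>" for s c
      proof (rule attain_abs[OF K(1,2,3), where h = "\<lambda>x. - w n s x"])
        have s01: "s \<in> {0..\<tau>}" using that(1) by simp
        show "maxex (\<lambda>x. - w n s x) K" using K(4)[OF w_X[OF s01]] by (rule conjunct2)
        show "\<forall>x\<in>Ocs. - w n s x \<le> \<beta>"
        proof
          fix x assume "x \<in> Ocs"
          then have "\<bar>w n s x\<bar> \<le> \<beta>" by (rule bcb[OF s01])
          then show "- w n s x \<le> \<beta>" by (rule abs_le_D2)
        qed
      qed (rule that)+
      show "\<exists>\<delta>>0. \<forall>s'\<in>{0..\<tau>}. \<bar>s' - s\<bar> < \<delta> \<longrightarrow> (\<forall>x\<in>Oh. \<bar>- w n s' x - - w n s x\<bar> \<le> \<epsilon>)"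
        if "s \<in> {0..\<tau>}" "\<epsilon> > 0" for s \<epsilon>
      proof -
        have e: "\<And>a b::real. \<bar>- a - - b\<bar> = \<bar>a - b\<bar>" by linarith
        show ?thesis unfolding e using w_cont that by blast
      qed
      show "\<exists>\<delta>>0. \<forall>h. h \<noteq> 0 \<and> \<bar>h\<bar> < \<delta> \<and> s + h \<in> {0..\<tau>} \<longrightarrow>
                     (\<forall>x\<in>Os. \<bar>(- w n (s + h) x - - w n s x) / h - - ws n s x\<bar> \<le> \<epsilon>)"
        if "s \<in> {0<..\<tau>}" "\<epsilon> > 0" for s \<epsilon> unfolding neg_quot using w_deriv that by blast
      show "- ws n s x0 \<le> \<kappa> * \<beta> - \<kappa> * - w n s x0"
        if "s \<in> {0<..\<tau>}" "x0 \<in> Os" "\<forall>x\<in>Oh. - w n s x \<le> - w n s x0" "- w n s x0 > \<beta>" for s x0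
      proof -
        define mw where "mw = (\<lambda>y. 0 + (-1) * w n s y)"
        have mwDL: "mw \<in> DL" unfolding mw_def by (rule DL_lin[OF DL_zero w_DL[OF that(1)]])
        have "L mw x0 \<le> 0" using A1a[OF mwDL that(2)] that(3) unfolding mw_def by simp
        moreover have "L mw x0 = L (\<lambda>x. 0) x0 + (-1) * L (w n s) x0"
          unfolding mw_def by (rule L_lin[OF DL_zero w_DL[OF that(1)] that(2)])
        ultimately have "L (w n s) x0 \<ge> 0" using L0[OF that(2)] by simp
        moreover have "ws n s x0 + \<kappa> * w n s x0 = L (w n s) x0 + \<phi> (v n x0)"
          using w_eq[OF that(1,2)] unfolding \<phi>_def by simp
        ultimately show ?thesis using Fb[OF that(2)] by linarith
      qed
    qed
    have "\<tau> \<in> {0..\<tau>}" using \<tau>_pos by simp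
    then show ?thesis using up down by force
  qed
  show ?thesis
  proof
    fix n show "\<forall>x\<in>Oh. \<bar>v n x\<bar> \<le> \<beta>"
    proof (induction n)
      case 0 then show ?case using v0 u0_bd by simp
    next
      case (Suc n) then show ?case using step v_step by simp
    qed
  qed
qed

end
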